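(* Let $A,B\in M_2(\mathbb{Z})$ be expanding matrices with characteristic polynomials $x^2+px+q$ and $x^2-px+q$ respectively ($p,q\in\mathbb{Z}$). Let $v,w\in\mathbb{R}^2$ be nonzero vectors such that $\{v,Av\}$ and $\{w,Bw\}$ are each linearly independent. Let $c_i,d_i\in\mathbb{Z}$ for $i=0,1,\dots,|q|-1$ be such that the points $c_iAv+d_iv$ are pairwise distinct, and put $\mathcal{D}=\{c_iAv+d_iv: i=0,\dots,|q|-1\}$ and $\mathcal{D}'=\{-c_iBw+d_iw: i=0,\dots,|q|-1\}$. Then $T(A,\mathcal{D})$ is connected if and only if $T(B,\mathcal{D}')$ is connected.
   Context: A real square matrix is expanding if all its eigenvalues have modulus strictly larger than $1$. For an expanding matrix $A\in M_n(\mathbb{Z})$ and a finite set $\mathcal{D}\subset\mathbb{R}^n$ with $|\mathcal D|=|\det A|$, the self-affine set $T(A,\mathcal{D})$ is the unique nonempty compact set $T$ with $AT=T+\mathcal{D}$; equivalently $T=\{\sum_{i=1}^\infty A^{-i}d_{j_i}: d_{j_i}\in\mathcal{D}\}$. *)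

theory Defs
  imports "HOL-Analysis.Analysis"
begin

text \<open>Integer matrix: all entries are integers.\<close>
definition int_matrix :: "real^'n^'n \<Rightarrow> bool" where
  "int_matrix A \<longleftrightarrow> (\<forall>i j. A $ i $ j \<in> \<int>)"

text \<open>Complexification of a real matrix.\<close>
definition cmat :: "real^'n^'n \<Rightarrow> complex^'n^'n" where
  "cmat A = (\<chi> i j. complex_of_real (A $ i $ j))"

text \<open>Expanding: every (complex) eigenvalue, i.e. every root of the characteristic
  polynomial det(zI - A), has modulus strictly larger than 1.\<close>
definition expanding :: "real^'n^'n \<Rightarrow> bool" where
  "expanding A \<longleftrightarrow> (\<forall>z::complex. det (mat z - cmat A) = 0 \<longrightarrow> cmod z > 1)"

text \<open>The self-affine set T(A,D) = { sum_{i>=1} A^{-i} d_i : d_i in D }.\<close>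
definition self_affine :: "real^'n^'n \<Rightarrow> (real^'n) set \<Rightarrow> (real^'n) set" where
  "self_affine A D = {x. \<exists>d::nat \<Rightarrow> real^'n. (\<forall>i. d i \<in> D) \<and>
      (\<lambda>i. (((*v) (matrix_inv A)) ^^ (Suc i)) (d i)) sums x}"

end

theory Submission
  imports Defs
begin

definition Tset :: "('a::euclidean_space \<Rightarrow> 'a) \<Rightarrow> 'a set \<Rightarrow> 'a set" where
  "Tset f D = {x. \<exists>d. (\<forall>k. d k \<in> D) \<and> (\<lambda>k. (f^^Suc k) (d k)) sums x}"

lemma linear_funpow: fixes f :: "'a::real_vector \<Rightarrow> 'a" shows "linear f \<Longrightarrow> linear (f^^n)"
proof (induction n)
  case 0 then show ?case by (simp add: linear_id[unfolded id_def])
next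
  case (Suc n) then show ?case using linear_compose[of "f^^n" f] by (simp add: o_def)
qed

locale ifs =
  fixes f :: "'a::euclidean_space \<Rightarrow> 'a" and c :: "nat \<Rightarrow> real"
    and I :: "'i set" and e :: "'i \<Rightarrow> 'a"
  assumes lin: "linear f" and injf: "inj f" and sc: "summable c" and cnn: "\<And>n. c n \<ge> 0"
    and bnd: "\<And>n x. norm ((f^^n) x) \<le> c n * norm x"
    and finI: "finite I" and neI: "I \<noteq> {}"
begin

abbreviation "D \<equiv> e ` I"
abbreviation "T \<equiv> Tset f D"
definition "g i x = f (x + e i)"
definition "DT = {a - b | a b. a \<in> T \<and> b \<in> T}"
definition "rel = {(i,j). i \<in> I \<and> j \<in> I \<and> e j - e i \<in> DT}"

lemma Rb: obtains R where "R \<ge> 0" "\<And>y. y \<in> D \<Longrightarrow> norm y \<le> R"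
proof -
  have "bounded D" using finI by (simp add: finite_imp_bounded)
  then obtain R where "\<And>y. y \<in> D \<Longrightarrow> norm y \<le> R" by (auto simp: bounded_iff)
  then show ?thesis by (intro that[of "max R 0"]) (auto intro: order_trans[OF _ max.cobounded1])
qed

lemma blin: "bounded_linear f" using lin linear_conv_bounded_linear by blast

lemma summ_dig: assumes "\<forall>k. d k \<in> D" shows "summable (\<lambda>k. (f^^Suc k) (d k))"
proof -
  obtain R where R: "R \<ge> 0" "\<And>y. y \<in> D \<Longrightarrow> norm y \<le> R" using Rb by blast
  have "summable (\<lambda>k. c (Suc k) * R)"
    using sc by (simp add: summable_Suc_iff summable_mult2)
  moreover have "norm ((f^^Suc k) (d k)) \<le> c (Suc k) * R" for k
    using bnd[of "Suc k" "d k"] R(2)[of "d k"] assms cnn[of "Suc k"]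
    by (meson dual_order.trans mult_left_mono)
  ultimately show ?thesis by (rule summable_comparison_test'[where N=0])
qed

lemma T_piece: assumes "i \<in> I" "x \<in> T" shows "g i x \<in> T"
proof -
  obtain d where d: "\<forall>k. d k \<in> D" "(\<lambda>k. (f^^Suc k) (d k)) sums x"
    using assms(2) unfolding Tset_def by blast
  define d' where "d' = case_nat (e i) d"
  have "(\<lambda>k. f ((f^^Suc k) (d k))) sums f x"
    using bounded_linear.sums[OF blin d(2)] .
  then have "(\<lambda>k. (f^^Suc (Suc k)) (d' (Suc k))) sums f x"
    by (simp add: d'_def funpow_swap1)
  then have "(\<lambda>k. (f^^Suc k) (d' k)) sums (f x + f (e i))"
    by (subst (asm) sums_Suc_iff) (simp add: d'_def)
  moreover have "\<forall>k. d' k \<in> D" using d(1) assms(1) by (auto simp: d'_def split: nat.split)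
  moreover have "f (x + e i) = f x + f (e i)" using linear_add[OF lin] by blast
  ultimately show ?thesis unfolding Tset_def g_def by auto
qed

lemma T_decomp: assumes "x \<in> T" shows "\<exists>i\<in>I. \<exists>x'\<in>T. x = g i x'"
proof -
  obtain d where d: "\<forall>k. d k \<in> D" "(\<lambda>k. (f^^Suc k) (d k)) sums x"
    using assms unfolding Tset_def by blast
  have "summable (\<lambda>k. (f^^Suc k) (d (Suc k)))" using d(1) by (intro summ_dig) auto
  then obtain x' where x': "(\<lambda>k. (f^^Suc k) (d (Suc k))) sums x'" by (auto simp: summable_def)
  have "x' \<in> T" using x' d(1) unfolding Tset_def by (intro CollectI exI[of _ "\<lambda>k. d (Suc k)"]) auto
  have "(\<lambda>k. f ((f^^Suc k) (d (Suc k)))) sums f x'"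
    using bounded_linear.sums[OF blin x'] .
  then have "(\<lambda>k. (f^^Suc (Suc k)) (d (Suc k))) sums f x'"
    by (simp add: funpow_swap1)
  then have "(\<lambda>k. (f^^Suc k) (d k)) sums (f x' + f (d 0))"
    by (subst (asm) sums_Suc_iff) simp
  then have "x = f x' + f (d 0)" using d(2) sums_unique2 by blast
  moreover obtain i where "i \<in> I" "d 0 = e i" using d(1) by blast
  ultimately show ?thesis using \<open>x' \<in> T\<close> linear_add[OF lin] unfolding g_def by metis
qed

lemma T_ne: "T \<noteq> {}"
proof -
  obtain i where "i \<in> I" using neI by blast
  have "summable (\<lambda>k. (f^^Suc k) (e i))" using summ_dig[of "\<lambda>_. e i"] \<open>i \<in> I\<close> by auto
  then obtain s where "(\<lambda>k. (f^^Suc k) ((\<lambda>_. e i) k)) sums s" by (auto simp: summable_def)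
  then have "s \<in> T" unfolding Tset_def mem_Collect_eq
    by (intro exI[of _ "\<lambda>_. e i"]) (use \<open>i \<in> I\<close> in auto)
  then show ?thesis by blast
qed

lemma T_bounded: obtains R where "R \<ge> 0" "\<And>x. x \<in> T \<Longrightarrow> norm x \<le> R"
proof -
  obtain R where R: "R \<ge> 0" "\<And>y. y \<in> D \<Longrightarrow> norm y \<le> R" using Rb by blast
  have s: "summable (\<lambda>k. c (Suc k) * R)"
    using sc by (simp add: summable_Suc_iff summable_mult2)
  have "norm x \<le> (\<Sum>k. c (Suc k) * R)" if x: "x \<in> T" for x
  proof -
    obtain d where d: "\<forall>k. d k \<in> D" "(\<lambda>k. (f^^Suc k) (d k)) sums x"
      using x unfolding Tset_def by blast
    have "norm ((f^^Suc k) (d k)) \<le> c (Suc k) * R" for k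
      using bnd[of "Suc k" "d k"] R(2)[of "d k"] d(1) cnn[of "Suc k"]
      by (meson dual_order.trans mult_left_mono)
    then have "norm (suminf (\<lambda>k. (f^^Suc k) (d k))) \<le> (\<Sum>k. c (Suc k) * R)"
      by (intro norm_suminf_le s)
    then show ?thesis using d(2) sums_unique by metis
  qed
  moreover have "(\<Sum>k. c (Suc k) * R) \<ge> 0" using s cnn R(1) by (intro suminf_nonneg) auto
  ultimately show ?thesis by (intro that[of "(\<Sum>k. c (Suc k) * R)"]) auto
qed

lemma T_compact: "compact T"
proof -
  define S where "S = PiE UNIV (\<lambda>_::nat. D)"
  define \<Phi> where "\<Phi> = (\<lambda>d. suminf (\<lambda>k. (f^^Suc k) (d k)))"
  have TS: "T = \<Phi> ` S"
  proof
    show "T \<subseteq> \<Phi> ` S"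
      unfolding Tset_def S_def \<Phi>_def using sums_unique by (fastforce simp: PiE_UNIV_domain)
    show "\<Phi> ` S \<subseteq> T"
      unfolding Tset_def S_def \<Phi>_def using summ_dig by (fastforce simp: PiE_UNIV_domain summable_sums)
  qed
  have "compactin (product_topology (\<lambda>_. euclidean) UNIV) S"
    unfolding S_def compactin_PiE using finI by (auto intro: finite_imp_compact)
  then have cS: "compact S" by (simp add: euclidean_product_topology)
  obtain R where R: "R \<ge> 0" "\<And>y. y \<in> D \<Longrightarrow> norm y \<le> R" using Rb by blast
  have ul: "uniform_limit S (\<lambda>n d. \<Sum>k<n. (f^^Suc k) (d k)) \<Phi> sequentially"
    unfolding \<Phi>_def
  proof (rule Weierstrass_m_test)
    show "summable (\<lambda>k. c (Suc k) * R)"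
      using sc by (simp add: summable_Suc_iff summable_mult2)
    fix k and d :: "nat \<Rightarrow> 'a" assume "d \<in> S"
    then have dk: "d k \<in> D" by (auto simp: S_def PiE_UNIV_domain)
    show "norm ((f^^Suc k) (d k)) \<le> c (Suc k) * R"
      using bnd[of "Suc k" "d k"] R(2)[OF dk] cnn[of "Suc k"]
      by (meson dual_order.trans mult_left_mono)
  qed
  have "continuous_on S (\<lambda>d. \<Sum>k<n. (f^^Suc k) (d k))" for n
  proof (intro continuous_on_sum)
    fix k
    have bl: "bounded_linear (f^^Suc k)"
      using linear_funpow[OF lin] linear_conv_bounded_linear by blast
    show "continuous_on S (\<lambda>d. (f^^Suc k) (d k))"
      by (rule continuous_on_compose2[OF linear_continuous_on[OF bl], of S "\<lambda>d. d k" UNIV])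
        (auto intro: continuous_on_subset[OF continuous_on_product_coordinates])
  qed
  then have "continuous_on S \<Phi>"
    by (intro uniform_limit_theorem[OF _ ul]) auto
  then show ?thesis using TS cS compact_continuous_image by metis
qed

end

context ifs begin

lemma g_inT: "i \<in> I \<Longrightarrow> x \<in> T \<Longrightarrow> g i x \<in> T" by (rule T_piece)

lemma rel_sym: "(i,j) \<in> rel \<Longrightarrow> (j,i) \<in> rel"
proof -
  assume "(i,j) \<in> rel"
  then obtain a b where "a \<in> T" "b \<in> T" "e j - e i = a - b" "i \<in> I" "j \<in> I"
    unfolding rel_def DT_def by auto
  then have "e i - e j = b - a" by (simp add: algebra_simps)
  then show ?thesis using \<open>a \<in> T\<close> \<open>b \<in> T\<close> \<open>i \<in> I\<close> \<open>j \<in> I\<close>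
    unfolding rel_def DT_def by blast
qed

lemma compact_piece: "compact (g i ` T)"
proof -
  have "continuous_on T (\<lambda>x. f (x + e i))"
    by (rule continuous_on_compose2[OF linear_continuous_on[OF blin], of T "\<lambda>x. x + e i" UNIV])
      (auto intro: continuous_intros)
  then have "continuous_on T (g i)" unfolding g_def .
  then show ?thesis using T_compact compact_continuous_image by blast
qed

lemma hata1:
  assumes "connected T" "i0 \<in> I" "j0 \<in> I" shows "(i0, j0) \<in> rel\<^sup>*"
proof (rule ccontr)
  assume nr: "(i0, j0) \<notin> rel\<^sup>*"
  define P where "P = {j\<in>I. (i0,j) \<in> rel\<^sup>*}"
  define U1 where "U1 = (\<Union>j\<in>P. g j ` T)"
  define U2 where "U2 = (\<Union>j\<in>I-P. g j ` T)"
  have "finite P" "finite (I - P)" using finI by (auto simp: P_def)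
  then have c1: "closed U1" "closed U2" unfolding U1_def U2_def
    by (auto intro!: closed_UN compact_imp_closed compact_piece)
  have TU: "T \<subseteq> U1 \<union> U2"
  proof
    fix x assume "x \<in> T"
    then obtain i x' where "i \<in> I" "x' \<in> T" "x = g i x'" using T_decomp by blast
    then show "x \<in> U1 \<union> U2" unfolding U1_def U2_def by (cases "i \<in> P") auto
  qed
  have UT: "U1 \<subseteq> T" "U2 \<subseteq> T" unfolding U1_def U2_def P_def using g_inT by auto
  have disj: "U1 \<inter> U2 = {}"
  proof (rule ccontr)
    assume "U1 \<inter> U2 \<noteq> {}"
    then obtain i j a b where ij: "i \<in> P" "j \<in> I - P" "a \<in> T" "b \<in> T" "g i a = g j b"
      unfolding U1_def U2_def by blast
    then have "a + e i = b + e j" using injf unfolding g_def inj_def by blast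
    then have "e j - e i = a - b" by (simp add: algebra_simps)
    then have "(i,j) \<in> rel" using ij unfolding rel_def DT_def P_def by blast
    then have "(i0,j) \<in> rel\<^sup>*" using ij(1) unfolding P_def by auto
    then show False using ij(2) unfolding P_def by auto
  qed
  obtain t where "t \<in> T" using T_ne by blast
  have "i0 \<in> P" using assms(2) by (auto simp: P_def)
  then have "g i0 t \<in> U1" using \<open>t \<in> T\<close> unfolding U1_def by blast
  moreover have "j0 \<in> I - P" using assms(3) nr by (auto simp: P_def)
  then have "g j0 t \<in> U2" using \<open>t \<in> T\<close> unfolding U2_def by blast
  ultimately have "U1 \<inter> T \<noteq> {}" "U2 \<inter> T \<noteq> {}" using UT by blast+
  moreover have "U1 \<inter> U2 \<inter> T = {}" using disj by blast
  ultimately show False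
    using assms(1) c1 TU unfolding connected_closed by (meson)
qed

definition "Rn n = {(x,y). x \<in> T \<and> y \<in> T \<and> y - x \<in> (f^^n) ` DT}"

lemma map_Rn: assumes "i \<in> I" "(a,b) \<in> (Rn n)\<^sup>*" shows "(g i a, g i b) \<in> (Rn (Suc n))\<^sup>*"
  using assms(2)
proof (induction rule: rtrancl_induct)
  case base then show ?case by simp
next
  case (step y z)
  have "(g i y, g i z) \<in> Rn (Suc n)"
  proof -
    from step(2) obtain u where u: "y \<in> T" "z \<in> T" "u \<in> DT" "z - y = (f^^n) u"
      unfolding Rn_def by auto
    have "g i z - g i y = f (z - y)" unfolding g_def using linear_diff[OF lin]
      by (metis add_diff_cancel_right diff_add_eq)
    also have "\<dots> = (f^^Suc n) u" using u(4) by simp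
    finally show ?thesis using u assms(1) g_inT unfolding Rn_def by auto
  qed
  then show ?case using step(3) by (meson rtrancl_into_rtrancl)
qed

lemma chain_all:
  assumes gc: "\<forall>i\<in>I. \<forall>j\<in>I. (i,j) \<in> rel\<^sup>*"
  shows "x \<in> T \<Longrightarrow> y \<in> T \<Longrightarrow> (x,y) \<in> (Rn n)\<^sup>*"
proof (induction n arbitrary: x y)
  case 0
  then have "(x,y) \<in> Rn 0" unfolding Rn_def DT_def by auto
  then show ?case by auto
next
  case (Suc n)
  have bas: "(g i a, g i b) \<in> (Rn (Suc n))\<^sup>*" if "i \<in> I" "a \<in> T" "b \<in> T" for i a b
    using map_Rn[OF that(1) Suc.IH[OF that(2,3)]] .
  have path: "(i,j) \<in> rel\<^sup>* \<Longrightarrow> i \<in> I \<Longrightarrow> a \<in> T \<Longrightarrow> b \<in> T \<Longrightarrow> (g i a, g j b) \<in> (Rn (Suc n))\<^sup>*"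
    for i j a b
  proof (induction arbitrary: b rule: rtrancl_induct)
    case base then show ?case using bas[of i a b] by simp
  next
    case (step k j)
    from step(2) obtain a' b' where ab: "a' \<in> T" "b' \<in> T" "e j - e k = a' - b'" "k \<in> I" "j \<in> I"
      unfolding rel_def DT_def by auto
    have "a' + e k = b' + e j" using ab(3) by (simp add: algebra_simps)
    then have p: "g k a' = g j b'" unfolding g_def by simp
    have "(g i a, g k a') \<in> (Rn (Suc n))\<^sup>*" using step.IH[OF step.prems(1,2) ab(1)] .
    moreover have "(g j b', g j b) \<in> (Rn (Suc n))\<^sup>*" using bas[OF ab(5) ab(2) step.prems(3)] .
    ultimately show ?case using p by (metis rtrancl_trans)
  qed
  obtain i x' where "i \<in> I" "x' \<in> T" "x = g i x'" using T_decomp Suc.prems by blast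
  moreover obtain j y' where "j \<in> I" "y' \<in> T" "y = g j y'" using T_decomp Suc.prems by blast
  ultimately show ?case using path[of i j x' y'] gc by simp
qed

lemma hata2:
  assumes gc: "\<forall>i\<in>I. \<forall>j\<in>I. (i,j) \<in> rel\<^sup>*"
  shows "connected T"
proof (rule ccontr)
  assume "\<not> connected T"
  then obtain A B where AB: "closed A" "closed B" "T \<subseteq> A \<union> B" "A \<inter> B \<inter> T = {}"
     "A \<inter> T \<noteq> {}" "B \<inter> T \<noteq> {}"
    unfolding connected_closed by blast
  define K1 where "K1 = A \<inter> T"
  define K2 where "K2 = B \<inter> T"
  have "compact K1" unfolding K1_def using compact_Int_closed[OF T_compact AB(1)] by (simp add: Int_commute)
  moreover have "closed K2" unfolding K2_def using T_compact AB(2) compact_imp_closed by blast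
  ultimately have sd: "setdist K1 K2 > 0"
    using AB(4-6) setdist_gt_0_compact_closed unfolding K1_def K2_def by blast
  define \<delta> where "\<delta> = setdist K1 K2"
  obtain R where R: "R \<ge> 0" "\<And>x. x \<in> T \<Longrightarrow> norm x \<le> R" using T_bounded by blast
  have "c \<longlonglongrightarrow> 0" using sc summable_LIMSEQ_zero by blast
  then have "(\<lambda>n. c n * (2*R+1)) \<longlonglongrightarrow> 0 * (2*R+1)" by (intro tendsto_intros)
  then have "eventually (\<lambda>n. c n * (2*R+1) < \<delta>) sequentially"
    using sd unfolding \<delta>_def by (intro order_tendstoD) auto
  then obtain n where n: "c n * (2*R+1) < \<delta>" by (meson eventually_sequentially order.refl)
  have small: "dist y z < \<delta>" if "(y,z) \<in> Rn n" for y z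
  proof -
    from that obtain a b where ab: "a \<in> T" "b \<in> T" "z - y = (f^^n) (a - b)"
      unfolding Rn_def DT_def by auto
    have "norm (a - b) \<le> 2*R+1" using R(2)[OF ab(1)] R(2)[OF ab(2)] norm_triangle_ineq4[of a b]
      by linarith
    then have "norm ((f^^n) (a - b)) \<le> c n * (2*R+1)"
      using bnd[of n "a-b"] cnn[of n] by (meson dual_order.trans mult_left_mono)
    then have "norm (z - y) < \<delta>" using ab(3) n by simp
    then show ?thesis by (simp add: dist_norm norm_minus_commute)
  qed
  have stay: "(x,y) \<in> (Rn n)\<^sup>* \<Longrightarrow> x \<in> K1 \<Longrightarrow> y \<in> K1" for x y
  proof (induction rule: rtrancl_induct)
    case base then show ?case .
  next
    case (step y z)
    then have yz: "y \<in> K1" "z \<in> T" "dist y z < \<delta>" using small unfolding Rn_def by auto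
    show ?case
    proof (rule ccontr)
      assume "z \<notin> K1"
      then have "z \<in> K2" using yz AB(3) unfolding K1_def K2_def by auto
      then have "\<delta> \<le> dist y z" unfolding \<delta>_def using yz(1) by (rule setdist_le_dist[rotated])
      then show False using yz(3) by simp
    qed
  qed
  obtain x y where "x \<in> K1" "y \<in> K2" using AB(5,6) unfolding K1_def K2_def by blast
  then have "(x,y) \<in> (Rn n)\<^sup>*" using chain_all[OF gc] unfolding K1_def K2_def by blast
  then have "y \<in> K1" using stay \<open>x \<in> K1\<close> by blast
  then show False using \<open>y \<in> K2\<close> AB(4) unfolding K1_def K2_def by blast
qed

theorem hata: "connected T \<longleftrightarrow> (\<forall>i\<in>I. \<forall>j\<in>I. (i,j) \<in> rel\<^sup>*)"
  using hata1 hata2 by blast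

end

lemma scal:
  fixes u :: "nat \<Rightarrow> complex" and \<mu>1 \<mu>2 :: complex and \<rho> :: real
  assumes rec: "\<And>n. u (Suc (Suc n)) = (\<mu>1+\<mu>2)*u (Suc n) - \<mu>1*\<mu>2*u n"
    and m1: "cmod \<mu>1 \<le> \<rho>" and m2: "cmod \<mu>2 \<le> \<rho>" and rp: "0 < \<rho>"
  shows "cmod (u n) \<le> (cmod (u 0) + n * cmod (u 1 - \<mu>2 * u 0) / \<rho>) * \<rho>^n"
proof -
  define V where "V n = u (Suc n) - \<mu>2 * u n" for n
  have VS: "V (Suc n) = \<mu>1 * V n" for n unfolding V_def using rec[of n] by (simp add: algebra_simps)
  have Vb: "cmod (V n) \<le> \<rho>^n * cmod (V 0)" for n
  proof (induction n)
    case 0 then show ?case by simp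
  next
    case (Suc n)
    have "cmod (V (Suc n)) = cmod \<mu>1 * cmod (V n)" by (simp add: VS norm_mult)
    also have "\<dots> \<le> \<rho> * (\<rho>^n * cmod (V 0))"
      using Suc m1 rp by (intro mult_mono) auto
    finally show ?case by simp
  qed
  define a where "a = cmod (u 0)"
  define b where "b = cmod (V 0)"
  have b1: "b = cmod (u 1 - \<mu>2 * u 0)" unfolding b_def V_def by simp
  have "cmod (u n) \<le> (a + n * b / \<rho>) * \<rho>^n"
  proof (induction n)
    case 0 then show ?case by (simp add: a_def)
  next
    case (Suc n)
    have "u (Suc n) = \<mu>2 * u n + V n" unfolding V_def by simp
    then have "cmod (u (Suc n)) \<le> cmod \<mu>2 * cmod (u n) + cmod (V n)"
      by (metis norm_mult norm_triangle_ineq)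
    also have "\<dots> \<le> \<rho> * ((a + n * b / \<rho>) * \<rho>^n) + \<rho>^n * b"
      using Suc m2 Vb[of n] rp unfolding b_def by (intro add_mono mult_mono) auto
    also have "\<dots> = (a + (Suc n) * b / \<rho>) * \<rho>^(Suc n)"
      using rp by (simp add: field_simps)
    finally show ?case .
  qed
  then show ?thesis using b1 a_def by simp
qed

lemma mat_inv_props:
  fixes M :: "real^'n^'n" assumes "invertible M"
  shows "M ** matrix_inv M = mat 1" "matrix_inv M ** M = mat 1"
  using someI_ex[OF assms[unfolded invertible_def]] unfolding matrix_inv_def by auto

lemma cdet2:
  fixes M :: "real^2^2"
  shows "det (mat z - cmat M) = z^2 - complex_of_real (M$1$1 + M$2$2) * z + complex_of_real (det M)"
  by (simp add: det_2 cmat_def mat_def power2_eq_square algebra_simps)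

lemma CH2:
  fixes M :: "real^2^2"
  shows "M *v (M *v z) = (M$1$1 + M$2$2) *\<^sub>R (M *v z) - det M *\<^sub>R z"
  by (simp add: vec_eq_iff forall_2 det_2 matrix_vector_mult_def sum_2 algebra_simps)

lemma decay2:
  fixes M :: "real^2^2" assumes ex: "expanding M"
  shows "invertible M"
    "\<exists>c. summable c \<and> (\<forall>n. c n \<ge> 0) \<and> (\<forall>n x. norm (((*v) (matrix_inv M) ^^ n) x) \<le> c n * norm x)"
proof -
  define tr where "tr = M$1$1 + M$2$2"
  define dl where "dl = det M"
  have cd: "det (mat z - cmat M) = z^2 - complex_of_real tr * z + complex_of_real dl" for z
    unfolding tr_def dl_def by (rule cdet2)
  have "dl \<noteq> 0"
  proof
    assume "dl = 0"
    then have "det (mat 0 - cmat M) = 0" using cd[of 0] by simp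
    then show False using ex unfolding expanding_def by fastforce
  qed
  then show inv: "invertible M" unfolding dl_def by (simp add: invertible_det_nz)
  define s where "s = csqrt (complex_of_real tr ^ 2 - 4 * complex_of_real dl)"
  define l1 where "l1 = (complex_of_real tr + s) / 2"
  define l2 where "l2 = (complex_of_real tr - s) / 2"
  have s2: "s^2 = complex_of_real tr ^ 2 - 4 * complex_of_real dl" unfolding s_def by simp
  have sum: "l1 + l2 = complex_of_real tr" unfolding l1_def l2_def by (simp add: field_simps)
  have prod: "l1 * l2 = complex_of_real dl"
  proof -
    have "l1 * l2 = (complex_of_real tr ^ 2 - s^2) / 4" unfolding l1_def l2_def
      by (simp add: field_simps power2_eq_square)
    then show ?thesis using s2 by simp
  qed
  have "det (mat l1 - cmat M) = 0" unfolding cd sum[symmetric] prod[symmetric]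
    by (simp add: power2_eq_square algebra_simps)
  then have L1: "cmod l1 > 1" using ex unfolding expanding_def by blast
  have "det (mat l2 - cmat M) = 0" unfolding cd sum[symmetric] prod[symmetric]
    by (simp add: power2_eq_square algebra_simps)
  then have L2: "cmod l2 > 1" using ex unfolding expanding_def by blast
  define m1 where "m1 = 1 / l1"
  define m2 where "m2 = 1 / l2"
  have l1n: "l1 \<noteq> 0" "l2 \<noteq> 0" using L1 L2 by auto
  have cm1: "cmod m1 < 1" "cmod m2 < 1" using L1 L2 unfolding m1_def m2_def
    by (auto simp: norm_divide divide_less_eq)
  have cm0: "cmod m1 > 0" "cmod m2 > 0" using l1n unfolding m1_def m2_def by auto
  define \<rho> where "\<rho> = max (cmod m1) (cmod m2)"
  have rp: "0 < \<rho>" "\<rho> < 1" using cm1 cm0 unfolding \<rho>_def by (auto simp: less_max_iff_disj)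
  have msum: "m1 + m2 = complex_of_real (tr / dl)"
    unfolding m1_def m2_def using l1n sum prod by (simp add: field_simps)
  have mprod: "m1 * m2 = complex_of_real (1 / dl)"
    unfolding m1_def m2_def using l1n prod by (simp add: field_simps)
  define N where "N = matrix_inv M"
  have MN: "M *v (N *v z) = z" for z
    using mat_inv_props(1)[OF inv] unfolding N_def
    by (metis matrix_vector_mul_assoc matrix_vector_mul_lid)
  obtain K where K: "K > 0" "\<And>x. norm (N *v x) \<le> norm x * K"
    using bounded_linear.pos_bounded[OF matrix_vector_mul_bounded_linear[of N]] by blast
  define c where "c n = 2 * \<rho>^n + (2 * (K+1) / \<rho>) * (of_nat (Suc n) * \<rho>^n)" for n
  have "summable (\<lambda>n. diffs (\<lambda>_. 1::real) n * \<rho>^n)"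
    using rp by (intro termdiff_converges[where K=1]) auto
  then have "summable (\<lambda>n. of_nat (Suc n) * \<rho>^n)" by (simp add: diffs_def)
  then have sc: "summable c" unfolding c_def using rp
    by (intro summable_add summable_mult summable_geometric) auto
  have cnn: "c n \<ge> 0" for n unfolding c_def using rp K by auto
  have bnd: "norm (((*v) N ^^ n) x) \<le> c n * norm x" for n x
  proof -
    define y where "y n = ((*v) N ^^ n) x" for n
    have yS: "y (Suc n) = N *v y n" for n unfolding y_def by simp
    have yrec: "y (Suc (Suc n)) = (tr / dl) *\<^sub>R y (Suc n) - (1 / dl) *\<^sub>R y n" for n
    proof -
      have "y n = M *v (M *v y (Suc (Suc n)))" using MN yS by simp
      also have "\<dots> = tr *\<^sub>R y (Suc n) - dl *\<^sub>R y (Suc (Suc n))"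
        unfolding CH2 tr_def[symmetric] dl_def[symmetric] using MN yS by simp
      finally have h: "y n + dl *\<^sub>R y (Suc (Suc n)) = tr *\<^sub>R y (Suc n)" by (simp add: algebra_simps)
      then have "(1/dl) *\<^sub>R (y n + dl *\<^sub>R y (Suc (Suc n))) = (1/dl) *\<^sub>R (tr *\<^sub>R y (Suc n))" by simp
      then have "(1/dl) *\<^sub>R y n + y (Suc (Suc n)) = (tr/dl) *\<^sub>R y (Suc n)"
        using \<open>dl \<noteq> 0\<close> by (simp add: scaleR_add_right)
      then show ?thesis by (metis add_diff_cancel_left')
    qed
    have comp: "\<bar>y n $ k\<bar> \<le> (1 + n * (K+1) / \<rho>) * \<rho>^n * norm x" for k
    proof -
      define u where "u n = complex_of_real (y n $ k)" for n
      have "u (Suc (Suc n)) = (m1+m2)*u (Suc n) - m1*m2*u n" for n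
        unfolding u_def msum mprod yrec[of n] by simp
      then have sb: "cmod (u n) \<le> (cmod (u 0) + n * cmod (u 1 - m2 * u 0) / \<rho>) * \<rho>^n"
        using rp by (intro scal) (auto simp: \<rho>_def)
      have u0: "cmod (u 0) \<le> norm x" unfolding u_def y_def by (simp add: component_le_norm_cart)
      have "\<bar>y 1 $ k\<bar> \<le> norm (y 1)" by (rule component_le_norm_cart)
      also have "\<dots> \<le> norm x * K" unfolding y_def using K(2) by simp
      finally have u1: "cmod (u 1) \<le> norm x * K" unfolding u_def by simp
      have "cmod (u 1 - m2 * u 0) \<le> cmod (u 1) + cmod m2 * cmod (u 0)"
        by (metis norm_mult norm_triangle_ineq4)
      also have "\<dots> \<le> norm x * K + 1 * norm x"
      proof (rule add_mono[OF u1])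
        show "cmod m2 * cmod (u 0) \<le> 1 * norm x"
          by (rule mult_mono) (use cm1(2) u0 in auto)
      qed
      finally have "cmod (u 1 - m2 * u 0) \<le> (K+1) * norm x" by (simp add: algebra_simps)
      then have "cmod (u 0) + n * cmod (u 1 - m2 * u 0) / \<rho> \<le> norm x + n * ((K+1) * norm x) / \<rho>"
        using u0 rp by (intro add_mono divide_right_mono mult_left_mono) auto
      then have "cmod (u n) \<le> (norm x + n * ((K+1) * norm x) / \<rho>) * \<rho>^n"
        using sb rp by (meson order_trans mult_right_mono zero_le_power less_imp_le)
      also have "\<dots> = (1 + n * (K+1) / \<rho>) * \<rho>^n * norm x" by (simp add: field_simps)
      finally show ?thesis unfolding u_def by simp
    qed
    have "norm (y n) \<le> \<bar>y n $ 1\<bar> + \<bar>y n $ 2\<bar>"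
      using norm_le_l1_cart[of "y n"] by (simp add: sum_2)
    also have "\<dots> \<le> 2 * ((1 + n * (K+1) / \<rho>) * \<rho>^n * norm x)" using comp[of 1] comp[of 2] by linarith
    also have "\<dots> \<le> c n * norm x"
    proof -
      have "(1 + n * (K+1) / \<rho>) \<le> 1 + (Suc n) * (K+1) / \<rho>"
        using rp K by (intro add_left_mono divide_right_mono mult_right_mono) auto
      moreover have "c n = 2 * ((1 + (Suc n) * (K+1) / \<rho>) * \<rho>^n)"
        unfolding c_def using rp by (simp add: field_simps)
      ultimately have "2 * ((1 + n * (K+1) / \<rho>) * \<rho>^n) \<le> c n"
        using rp by (simp add: mult_right_mono)
      then show ?thesis by (metis mult.assoc mult_right_mono norm_ge_zero)
    qed
    finally show ?thesis unfolding y_def .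
  qed
  show "\<exists>c. summable c \<and> (\<forall>n. c n \<ge> 0) \<and> (\<forall>n x. norm (((*v) (matrix_inv M) ^^ n) x) \<le> c n * norm x)"
    using sc cnn bnd unfolding N_def by blast
qed

definition d2 :: "real^2 \<Rightarrow> real^2 \<Rightarrow> real" where "d2 a b = a$1 * b$2 - a$2 * b$1"

lemma d2_ne:
  fixes v u :: "real^2"
  assumes ind: "\<forall>a b::real. a *\<^sub>R v + b *\<^sub>R u = 0 \<longrightarrow> a = 0 \<and> b = 0"
  shows "d2 v u \<noteq> 0"
proof
  assume h: "d2 v u = 0"
  have "(u$2) *\<^sub>R v + (- v$2) *\<^sub>R u = 0" using h
    by (simp add: vec_eq_iff forall_2 d2_def algebra_simps)
  then have "u$2 = 0 \<and> - v$2 = 0" using ind by blast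
  then have "u$2 = 0" "v$2 = 0" by auto
  have "(u$1) *\<^sub>R v + (- v$1) *\<^sub>R u = 0" using h
    by (simp add: vec_eq_iff forall_2 d2_def algebra_simps)
  then have "u$1 = 0 \<and> - v$1 = 0" using ind by blast
  then have "u$1 = 0" "v$1 = 0" by auto
  have "v = 0" using \<open>v$1 = 0\<close> \<open>v$2 = 0\<close> by (simp add: vec_eq_iff forall_2)
  then show False using ind[rule_format, of 1 0] by simp
qed

lemma decomp2:
  fixes v u z :: "real^2" assumes "d2 v u \<noteq> 0"
  shows "z = (d2 z u / d2 v u) *\<^sub>R v + (d2 v z / d2 v u) *\<^sub>R u"
proof -
  have e1: "(d2 z u) * v$1 + (d2 v z) * u$1 = z$1 * d2 v u" by (simp add: d2_def algebra_simps)
  have e2: "(d2 z u) * v$2 + (d2 v z) * u$2 = z$2 * d2 v u" by (simp add: d2_def algebra_simps)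
  have "d2 z u / d2 v u * v$1 + d2 v z / d2 v u * u$1 = z$1" using e1 assms by (simp add: field_simps)
  moreover have "d2 z u / d2 v u * v$2 + d2 v z / d2 v u * u$2 = z$2" using e2 assms by (simp add: field_simps)
  ultimately show ?thesis by (simp add: vec_eq_iff forall_2)
qed

lemma ext2:
  fixes v u :: "real^2" and F G :: "real^2 \<Rightarrow> real^2"
  assumes "d2 v u \<noteq> 0" "linear F" "linear G" "F v = G v" "F u = G u"
  shows "F z = G z"
proof -
  let ?a = "d2 z u / d2 v u" and ?b = "d2 v z / d2 v u"
  have "F z = F (?a *\<^sub>R v + ?b *\<^sub>R u)" using decomp2[OF assms(1), of z] by simp
  also have "\<dots> = ?a *\<^sub>R F v + ?b *\<^sub>R F u" using assms(2) by (simp add: linear_add linear_cmul)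
  also have "\<dots> = ?a *\<^sub>R G v + ?b *\<^sub>R G u" using assms(4,5) by simp
  also have "\<dots> = G (?a *\<^sub>R v + ?b *\<^sub>R u)" using assms(3) by (simp add: linear_add linear_cmul)
  also have "\<dots> = G z" using decomp2[OF assms(1), of z] by simp
  finally show ?thesis .
qed

definition mapb :: "real^2 \<Rightarrow> real^2 \<Rightarrow> real^2 \<Rightarrow> real^2 \<Rightarrow> real^2 \<Rightarrow> real^2" where
  "mapb v u w' u' z = (d2 z u / d2 v u) *\<^sub>R w' + (d2 v z / d2 v u) *\<^sub>R u'"

lemma d2_lin: "d2 (x + y) u = d2 x u + d2 y u" "d2 v (x + y) = d2 v x + d2 v y"
  "d2 (r *\<^sub>R x) u = r * d2 x u" "d2 v (r *\<^sub>R x) = r * d2 v x"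
  by (simp_all add: d2_def algebra_simps)

lemma mapb_lin: "linear (mapb v u w' u')"
proof (rule linearI)
  fix x y :: "real^2" and r :: real
  show "mapb v u w' u' (x + y) = mapb v u w' u' x + mapb v u w' u' y"
    unfolding mapb_def d2_lin by (simp add: add_divide_distrib scaleR_add_left)
  show "mapb v u w' u' (r *\<^sub>R x) = r *\<^sub>R mapb v u w' u' x"
    unfolding mapb_def d2_lin by (simp add: scaleR_add_right)
qed

lemma mapb_v: "d2 v u \<noteq> 0 \<Longrightarrow> mapb v u w' u' v = w'"
  unfolding mapb_def by (simp add: d2_def)
lemma mapb_u: "d2 v u \<noteq> 0 \<Longrightarrow> mapb v u w' u' u = u'"
  unfolding mapb_def by (simp add: d2_def)

lemma funpow_comm:
  assumes "\<And>z. L (f z) = f' (L z)" shows "L ((f^^n) z) = (f'^^n) (L z)"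
  by (induction n) (auto simp: assms)

lemma transfer:
  fixes L f f' :: "real^2 \<Rightarrow> real^2"
  assumes "linear L" "\<And>z. L (f z) = f' (L z)"
  shows "L ` Tset f D \<subseteq> Tset f' (L ` D)"
proof
  fix y assume "y \<in> L ` Tset f D"
  then obtain x d where x: "y = L x" "\<forall>k. d k \<in> D" "(\<lambda>k. (f^^Suc k) (d k)) sums x"
    unfolding Tset_def by blast
  have bl: "bounded_linear L" using assms(1) linear_conv_bounded_linear by blast
  have c: "L ((f^^Suc k) (d k)) = (f'^^Suc k) (L (d k))" for k
    by (rule funpow_comm[of L f f', OF assms(2)])
  have "(\<lambda>k. (f'^^Suc k) (L (d k))) sums L x" using bounded_linear.sums[OF bl x(3)] unfolding c .
  then have "(\<lambda>k. (f'^^Suc k) (L (d k))) sums y" using x(1) by simp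
  then show "y \<in> Tset f' (L ` D)" unfolding Tset_def mem_Collect_eq
    by (intro exI[of _ "\<lambda>k. L (d k)"]) (use x(2) in auto)
qed

lemma DT_sub:
  fixes f f2 :: "real^2 \<Rightarrow> real^2"
  assumes sm: "\<And>d. \<forall>k. d k \<in> D \<Longrightarrow> summable (\<lambda>k. (f^^Suc k) (d k))"
    and sg: "\<And>n z. (f2^^n) z = (-1)^n *\<^sub>R (f^^n) z"
  shows "{a - b | a b. a \<in> Tset f2 D \<and> b \<in> Tset f2 D} \<subseteq> {a - b | a b. a \<in> Tset f D \<and> b \<in> Tset f D}"
proof
  fix x assume "x \<in> {a - b | a b. a \<in> Tset f2 D \<and> b \<in> Tset f2 D}"
  then obtain a b da db where ab: "x = a - b" "\<forall>k. da k \<in> D" "\<forall>k. db k \<in> D"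
    "(\<lambda>k. (f2^^Suc k) (da k)) sums a" "(\<lambda>k. (f2^^Suc k) (db k)) sums b"
    unfolding Tset_def by blast
  define pa where "pa k = (if even (Suc k) then da k else db k)" for k
  define pb where "pb k = (if even (Suc k) then db k else da k)" for k
  have pD: "\<forall>k. pa k \<in> D" "\<forall>k. pb k \<in> D" using ab(2,3) unfolding pa_def pb_def by auto
  obtain a' where a': "(\<lambda>k. (f^^Suc k) (pa k)) sums a'" using sm[OF pD(1)] by (auto simp: summable_def)
  obtain b' where b': "(\<lambda>k. (f^^Suc k) (pb k)) sums b'" using sm[OF pD(2)] by (auto simp: summable_def)
  have "(\<lambda>k. (f2^^Suc k) (da k) - (f2^^Suc k) (db k)) sums (a - b)" using sums_diff[OF ab(4,5)] .
  moreover have "(\<lambda>k. (f2^^Suc k) (da k) - (f2^^Suc k) (db k)) = (\<lambda>k. (f^^Suc k) (pa k) - (f^^Suc k) (pb k))"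
  proof
    fix k
    show "(f2^^Suc k) (da k) - (f2^^Suc k) (db k) = (f^^Suc k) (pa k) - (f^^Suc k) (pb k)"
      unfolding sg pa_def pb_def by (cases "even (Suc k)") (auto simp: algebra_simps)
  qed
  ultimately have "(\<lambda>k. (f^^Suc k) (pa k) - (f^^Suc k) (pb k)) sums (a - b)" by simp
  moreover have "(\<lambda>k. (f^^Suc k) (pa k) - (f^^Suc k) (pb k)) sums (a' - b')" using sums_diff[OF a' b'] .
  ultimately have "x = a' - b'" using ab(1) sums_unique2 by blast
  moreover have "a' \<in> Tset f D" "b' \<in> Tset f D" unfolding Tset_def using a' b' pD by auto
  ultimately show "x \<in> {a - b | a b. a \<in> Tset f D \<and> b \<in> Tset f D}" by blast
qed

lemma ifs_of_mat:
  fixes M :: "real^2^2" and I :: "'i set"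
  assumes "expanding M" "finite I" "I \<noteq> {}"
  shows "ifs ((*v) (matrix_inv M)) (SOME c. summable c \<and> (\<forall>n. c n \<ge> 0) \<and> (\<forall>n x. norm (((*v) (matrix_inv M) ^^ n) x) \<le> c n * norm x)) I"
proof -
  let ?P = "\<lambda>c. summable c \<and> (\<forall>n. c n \<ge> 0) \<and> (\<forall>n x. norm (((*v) (matrix_inv M) ^^ n) x) \<le> c n * norm x)"
  have "?P (SOME c. ?P c)" using someI_ex[OF decay2(2)[OF assms(1)]] .
  moreover have "invertible (matrix_inv M)"
    using mat_inv_props[OF decay2(1)[OF assms(1)]] unfolding invertible_def by blast
  then have "inj ((*v) (matrix_inv M))" by (rule inj_matrix_vector_mult)
  ultimately show ?thesis using assms(2,3)
    apply (intro ifs.intro)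
    apply (rule matrix_vector_mul_linear)
    by auto
qed

lemma negmv: "(- M) *v x = - (M *v (x::real^'n))" for M :: "real^'n^'m"
  by (simp add: matrix_vector_mult_def vec_eq_iff sum_negf)

lemma mvneg: "M *v (- x) = - (M *v (x::real^'n))" for M :: "real^'n^'m"
  by (simp add: matrix_vector_mult_def vec_eq_iff sum_negf)

lemma mv_inv1: "invertible M \<Longrightarrow> M *v (matrix_inv M *v z) = z" for M :: "real^'n^'n"
  using mat_inv_props(1) by (metis matrix_vector_mul_assoc matrix_vector_mul_lid)

lemma mv_inv2: "invertible M \<Longrightarrow> matrix_inv M *v (M *v z) = z" for M :: "real^'n^'n"
  using mat_inv_props(2) by (metis matrix_vector_mul_assoc matrix_vector_mul_lid)

lemma invcomm:
  fixes M M' :: "real^2^2" and L :: "real^2 \<Rightarrow> real^2"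
  assumes "invertible M" "invertible M'" "\<And>z. L (M *v z) = M' *v L z"
  shows "L (matrix_inv M *v z) = matrix_inv M' *v (L z)"
proof -
  have "L z = M' *v L (matrix_inv M *v z)" using assms(3)[of "matrix_inv M *v z"] mv_inv1[OF assms(1)] by simp
  then show ?thesis using mv_inv2[OF assms(2)] by simp
qed

lemma sa_T: "self_affine M D = Tset ((*v) (matrix_inv M)) D"
  unfolding self_affine_def Tset_def by simp

lemma charpoly_facts:
  fixes M :: "real^2^2"
  assumes "\<forall>x::real. det (mat x - M) = x^2 + a * x + b"
  shows "M$1$1 + M$2$2 = - a" "det M = b"
proof -
  have h0: "det (mat 0 - M) = b" using assms[rule_format, of 0] by simp
  have h1: "det (mat 1 - M) = 1 + a + b" using assms[rule_format, of 1] by simp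
  show dM: "det M = b" using h0 by (simp add: det_2 mat_def)
  have "det (mat 1 - M) = 1 - (M$1$1 + M$2$2) + det M" by (simp add: det_2 mat_def algebra_simps)
  then show "M$1$1 + M$2$2 = - a" using h1 dM by simp
qed

theorem theorem3p4:
  fixes A B :: "real^2^2" and p q :: int and v w :: "real^2"
    and c d :: "nat \<Rightarrow> int"
  assumes "int_matrix A" and "int_matrix B"
    and "expanding A" and "expanding B"
    and "\<forall>x::real. det (mat x - A) = x^2 + of_int p * x + of_int q"
    and "\<forall>x::real. det (mat x - B) = x^2 - of_int p * x + of_int q"
    and "v \<noteq> 0" and "w \<noteq> 0"
    and "\<forall>a b::real. a *\<^sub>R v + b *\<^sub>R (A *v v) = 0 \<longrightarrow> a = 0 \<and> b = 0"
    and "\<forall>a b::real. a *\<^sub>R w + b *\<^sub>R (B *v w) = 0 \<longrightarrow> a = 0 \<and> b = 0"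
    and "inj_on (\<lambda>i. of_int (c i) *\<^sub>R (A *v v) + of_int (d i) *\<^sub>R v) {0..<nat \<bar>q\<bar>}"
  shows "connected (self_affine A ((\<lambda>i. of_int (c i) *\<^sub>R (A *v v) + of_int (d i) *\<^sub>R v) ` {0..<nat \<bar>q\<bar>}))
     \<longleftrightarrow> connected (self_affine B ((\<lambda>i. - of_int (c i) *\<^sub>R (B *v w) + of_int (d i) *\<^sub>R w) ` {0..<nat \<bar>q\<bar>}))"
proof -
  define I where "I = {0..<nat \<bar>q\<bar>}"
  define eA where "eA = (\<lambda>i. of_int (c i) *\<^sub>R (A *v v) + of_int (d i) *\<^sub>R v)"
  define eB where "eB = (\<lambda>i. - of_int (c i) *\<^sub>R (B *v w) + of_int (d i) *\<^sub>R w)"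
  have trA: "A$1$1 + A$2$2 = - of_int p" and detA: "det A = of_int q"
    using charpoly_facts[of A "of_int p" "of_int q"] assms(5) by auto
  have trB: "B$1$1 + B$2$2 = of_int p" and detB: "det B = of_int q"
    using charpoly_facts[of B "- of_int p" "of_int q"] assms(6) by auto
  have CHA: "A *v (A *v z) = (- of_int p) *\<^sub>R (A *v z) - of_int q *\<^sub>R z" for z
    using CH2[of A z] trA detA by simp
  have CHB: "B *v (B *v z) = (of_int p) *\<^sub>R (B *v z) - of_int q *\<^sub>R z" for z
    using CH2[of B z] trB detB by simp
  have exnB: "expanding (-B)" unfolding expanding_def
  proof (intro allI impI)
    fix z assume z: "det (mat z - cmat (-B)) = 0"
    have "det (mat z - cmat (-B)) = det (mat (-z) - cmat B)"
      unfolding cdet2 by (simp add: det_2 power2_eq_square algebra_simps)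
    then have "cmod (-z) > 1" using z assms(4) unfolding expanding_def by metis
    then show "cmod z > 1" by simp
  qed
  have invA: "invertible A" using decay2(1)[OF assms(3)] .
  have invB: "invertible B" using decay2(1)[OF assms(4)] .
  have invnB: "invertible (-B)" using decay2(1)[OF exnB] .
  have "q \<noteq> 0" using invA detA by (simp add: invertible_det_nz)
  then have neI: "I \<noteq> {}" unfolding I_def by auto
  have finI: "finite I" unfolding I_def by simp
  let ?u = "A *v v" and ?u' = "B *v w"
  have dv: "d2 v ?u \<noteq> 0" using d2_ne[OF assms(9)] .
  have dw: "d2 w ?u' \<noteq> 0" using d2_ne[OF assms(10)] .
  define L where "L = mapb v ?u w (- ?u')"
  define L' where "L' = mapb w ?u' v (- ?u)"
  have linL: "linear L" and linL': "linear L'" unfolding L_def L'_def by (rule mapb_lin)+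
  have Lv: "L v = w" and Lu: "L ?u = - ?u'" unfolding L_def using dv by (simp_all add: mapb_v mapb_u)
  have L'w: "L' w = v" and L'u: "L' ?u' = - ?u" unfolding L'_def using dw by (simp_all add: mapb_v mapb_u)
  have comm: "L (A *v z) = (-B) *v L z" for z
  proof (rule ext2[OF dv, of "\<lambda>z. L (A *v z)" "\<lambda>z. (-B) *v L z"])
    show "linear (\<lambda>z. L (A *v z))"
      using linear_compose[OF matrix_vector_mul_linear[of A] linL] by (simp add: o_def)
    show "linear (\<lambda>z. (-B) *v L z)"
      using linear_compose[OF linL matrix_vector_mul_linear[of "-B"]] by (simp add: o_def)
    show "L (A *v v) = (-B) *v L v" using Lu Lv by (simp add: negmv)
    have "L (A *v ?u) = (- of_int p) *\<^sub>R L ?u - of_int q *\<^sub>R L v"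
      unfolding CHA using linL by (simp add: linear_diff linear_cmul linear_neg)
    also have "\<dots> = (-B) *v L ?u" using Lu Lv CHB[of w] by (simp add: negmv mvneg algebra_simps)
    finally show "L (A *v ?u) = (-B) *v L ?u" .
  qed
  have comm': "L' ((-B) *v z) = A *v L' z" for z
  proof (rule ext2[OF dw, of "\<lambda>z. L' ((-B) *v z)" "\<lambda>z. A *v L' z"])
    show "linear (\<lambda>z. L' ((-B) *v z))"
      using linear_compose[OF matrix_vector_mul_linear[of "-B"] linL'] by (simp add: o_def)
    show "linear (\<lambda>z. A *v L' z)"
      using linear_compose[OF linL' matrix_vector_mul_linear[of A]] by (simp add: o_def)
    show "L' ((-B) *v w) = A *v L' w" using L'u L'w linL' by (simp add: negmv linear_neg)
    have "L' ((-B) *v ?u') = - (of_int p *\<^sub>R L' ?u' - of_int q *\<^sub>R L' w)"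
      unfolding negmv CHB using linL' by (simp add: linear_diff linear_cmul linear_neg)
    also have "\<dots> = A *v L' ?u'" using L'u L'w by (simp add: mvneg CHA algebra_simps)
    finally show "L' ((-B) *v ?u') = A *v L' ?u'" .
  qed
  have LL': "L' (L z) = z" for z
  proof (rule ext2[OF dv, of "\<lambda>z. L' (L z)" "\<lambda>z. z"])
    show "linear (\<lambda>z. L' (L z))" using linear_compose[OF linL linL'] by (simp add: o_def)
    show "linear (\<lambda>z::real^2. z)" by (rule linear_ident)
    show "L' (L v) = v" using Lv L'w by simp
    show "L' (L ?u) = ?u" using Lu L'u linL' by (simp add: linear_neg)
  qed
  have L'L: "L (L' z) = z" for z
  proof (rule ext2[OF dw, of "\<lambda>z. L (L' z)" "\<lambda>z. z"])
    show "linear (\<lambda>z. L (L' z))" using linear_compose[OF linL' linL] by (simp add: o_def)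
    show "linear (\<lambda>z::real^2. z)" by (rule linear_ident)
    show "L (L' w) = w" using Lv L'w by simp
    show "L (L' ?u') = ?u'" using Lu L'u linL by (simp add: linear_neg)
  qed
  have digL: "L (eA i) = eB i" for i
    unfolding eA_def eB_def using linL Lu Lv by (simp add: linear_add linear_cmul)
  have digL': "L' (eB i) = eA i" for i
    unfolding eA_def eB_def using linL' L'u L'w by (simp add: linear_add linear_cmul linear_diff)
  have imL: "L ` eA ` I = eB ` I" using digL by (simp add: image_image)
  have imL': "L' ` eB ` I = eA ` I" using digL' by (simp add: image_image)
  define fA where "fA = (*v) (matrix_inv A)"
  define f1 where "f1 = (*v) (matrix_inv (-B))"
  define f2 where "f2 = (*v) (matrix_inv B)"
  have cA: "L (fA z) = f1 (L z)" for z unfolding fA_def f1_def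
    by (rule invcomm[where L=L, OF invA invnB comm])
  have c1: "L' (f1 z) = fA (L' z)" for z unfolding fA_def f1_def
    by (rule invcomm[where L=L', OF invnB invA comm'])
  define TA where "TA = Tset fA (eA ` I)"
  define T1 where "T1 = Tset f1 (eB ` I)"
  define T2 where "T2 = Tset f2 (eB ` I)"
  have s1: "L ` TA \<subseteq> T1" unfolding TA_def T1_def using transfer[where f=fA and f'=f1, OF linL cA] imL by metis
  have s2: "L' ` T1 \<subseteq> TA" unfolding TA_def T1_def using transfer[where f=f1 and f'=fA, OF linL' c1] imL' by metis
  have eq1: "T1 = L ` TA"
  proof
    show "T1 \<subseteq> L ` TA"
    proof
      fix x assume "x \<in> T1" then show "x \<in> L ` TA" using s2 L'L by (metis image_eqI image_subset_iff)
    qed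
  qed (rule s1)
  have eq2: "TA = L' ` T1"
  proof
    show "TA \<subseteq> L' ` T1"
    proof
      fix x assume "x \<in> TA" then show "x \<in> L' ` T1" using s1 LL' by (metis image_eqI image_subset_iff)
    qed
  qed (rule s2)
  have contL: "continuous_on S L" for S
    using linL linear_conv_bounded_linear linear_continuous_on by blast
  have contL': "continuous_on S L'" for S
    using linL' linear_conv_bounded_linear linear_continuous_on by blast
  have conn1: "connected TA \<longleftrightarrow> connected T1"
    using connected_continuous_image[OF contL] connected_continuous_image[OF contL'] eq1 eq2 by metis
  obtain k1 where H1: "ifs f1 k1 I" using ifs_of_mat[OF exnB finI neI] unfolding f1_def by blast
  obtain k2 where H2: "ifs f2 k2 I" using ifs_of_mat[OF assms(4) finI neI] unfolding f2_def by blast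
  interpret H1: ifs f1 k1 I eB by (rule H1)
  interpret H2: ifs f2 k2 I eB by (rule H2)
  have f12: "f1 z = - f2 z" for z
  proof -
    have "z = (-B) *v (f1 z)" unfolding f1_def using mv_inv1[OF invnB] by simp
    then have "f2 z = f2 (- (B *v f1 z))" by (simp add: negmv)
    also have "\<dots> = - f1 z" unfolding f2_def using mv_inv2[OF invB] by (simp add: mvneg)
    finally show ?thesis by simp
  qed
  have sg1: "(f1^^n) z = (-1)^n *\<^sub>R (f2^^n) z" for n z
  proof (induction n)
    case 0 then show ?case by simp
  next
    case (Suc n)
    have "(f1^^Suc n) z = f1 ((f1^^n) z)" by simp
    also have "\<dots> = - f2 ((f1^^n) z)" by (rule f12)
    also have "\<dots> = - f2 ((-1)^n *\<^sub>R (f2^^n) z)" unfolding Suc.IH ..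
    also have "\<dots> = (-1)^Suc n *\<^sub>R (f2^^Suc n) z"
      unfolding f2_def by (simp add: scaleR_matrix_vector_assoc[symmetric] matrix_vector_mult_scaleR)
    finally show ?case .
  qed
  have sg2: "(f2^^n) z = (-1)^n *\<^sub>R (f1^^n) z" for n z
    by (simp add: sg1)
  have DTeq: "H1.DT = H2.DT"
    unfolding H1.DT_def H2.DT_def
  proof
    show "{a - b |a b. a \<in> Tset f1 (eB ` I) \<and> b \<in> Tset f1 (eB ` I)} \<subseteq> {a - b |a b. a \<in> Tset f2 (eB ` I) \<and> b \<in> Tset f2 (eB ` I)}"
      by (rule DT_sub[OF H2.summ_dig sg1])
    show "{a - b |a b. a \<in> Tset f2 (eB ` I) \<and> b \<in> Tset f2 (eB ` I)} \<subseteq> {a - b |a b. a \<in> Tset f1 (eB ` I) \<and> b \<in> Tset f1 (eB ` I)}"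
      by (rule DT_sub[OF H1.summ_dig sg2])
  qed
  have releq: "H1.rel = H2.rel" unfolding H1.rel_def H2.rel_def DTeq ..
  have "connected TA \<longleftrightarrow> connected T2"
    using conn1 H1.hata H2.hata releq unfolding T1_def T2_def by simp
  then show ?thesis unfolding TA_def T2_def fA_def f2_def sa_T[symmetric] eA_def eB_def I_def .
qed

end
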